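(* Let $G$ be a topological group. (i) Let $X$ be a discrete space with a continuous $G$-action and $c:G\times X\to\mathbf S^1$ a continuous cocycle. Then the representation $\lambda_X^c$ of $G$ on $\ell_2(X)$ is unitarily equivalent to a direct sum of monomial representations $\mathrm{Ind}_H^G\chi$ associated to open subgroups $H$ of $G$ (and unitary characters $\chi$ of $H$). (ii) Let $\pi=\bigoplus_{i\in I}\mathrm{Ind}_{H_i}^G\chi_i$ be a direct sum of monomial representations associated to open subgroups $H_i$ of $G$ and unitary characters $\chi_i$ of $H_i$. Let $X=\coprod_{i\in I}G/H_i$ with the natural $G$-action. Then $\pi$ is unitarily equivalent to $\lambda_X^c$ for some cocycle $c:G\times X\to\mathbf S^1$.
   Context: An action of $G$ on a discrete space $X$ is continuous iff all point stabilizers are open. A cocycle $c:G\times X\to\mathbf S^1$ satisfies $c(g_1g_2,x)=c(g_1,g_2x)c(g_2,x)$ for all $g_1,g_2\in G$, $x\in X$. The twisted permutation representation $\lambda_X^c$ on $\ell_2(X)$ is $\lambda_X^c(g)f(x)=c(g^{-1},x)f(g^{-1}x)$. A monomial representation is an induced representation $\mathrm{Ind}_H^G\chi$ with $\chi:H\to\mathbf S^1$ a (continuous) unitary character. *)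

theory Defs
  imports "HOL-Analysis.Analysis" "HOL-Algebra.Left_Coset"
begin

definition topological_group :: "('g, 'b) monoid_scheme \<Rightarrow> 'g topology \<Rightarrow> bool" where
  "topological_group G T \<longleftrightarrow> group G \<and> topspace T = carrier G \<and>
     continuous_map (prod_topology T T) T (\<lambda>(x, y). x \<otimes>\<^bsub>G\<^esub> y) \<and>
     continuous_map T T (\<lambda>x. inv\<^bsub>G\<^esub> x)"

definition open_subgroup :: "('g, 'b) monoid_scheme \<Rightarrow> 'g topology \<Rightarrow> 'g set \<Rightarrow> bool" where
  "open_subgroup G T H \<longleftrightarrow> subgroup H G \<and> openin T H"

definition unitary_character ::
  "('g, 'b) monoid_scheme \<Rightarrow> 'g topology \<Rightarrow> 'g set \<Rightarrow> ('g \<Rightarrow> complex) \<Rightarrow> bool" where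
  "unitary_character G T H chi \<longleftrightarrow>
     (\<forall>h\<in>H. cmod (chi h) = 1) \<and>
     (\<forall>h1\<in>H. \<forall>h2\<in>H. chi (h1 \<otimes>\<^bsub>G\<^esub> h2) = chi h1 * chi h2) \<and>
     continuous_map (subtopology T H) euclidean chi"

definition is_action :: "('g, 'b) monoid_scheme \<Rightarrow> 'x set \<Rightarrow> ('g \<Rightarrow> 'x \<Rightarrow> 'x) \<Rightarrow> bool" where
  "is_action G X \<phi> \<longleftrightarrow>
     (\<forall>g\<in>carrier G. \<forall>x\<in>X. \<phi> g x \<in> X) \<and>
     (\<forall>x\<in>X. \<phi> \<one>\<^bsub>G\<^esub> x = x) \<and>
     (\<forall>g1\<in>carrier G. \<forall>g2\<in>carrier G. \<forall>x\<in>X. \<phi> (g1 \<otimes>\<^bsub>G\<^esub> g2) x = \<phi> g1 (\<phi> g2 x))"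

definition continuous_action ::
  "('g, 'b) monoid_scheme \<Rightarrow> 'g topology \<Rightarrow> 'x set \<Rightarrow> ('g \<Rightarrow> 'x \<Rightarrow> 'x) \<Rightarrow> bool" where
  "continuous_action G T X \<phi> \<longleftrightarrow> is_action G X \<phi> \<and>
     continuous_map (prod_topology T (discrete_topology X)) (discrete_topology X) (\<lambda>(g, x). \<phi> g x)"

definition cocycle ::
  "('g, 'b) monoid_scheme \<Rightarrow> 'x set \<Rightarrow> ('g \<Rightarrow> 'x \<Rightarrow> 'x) \<Rightarrow> ('g \<Rightarrow> 'x \<Rightarrow> complex) \<Rightarrow> bool" where
  "cocycle G X \<phi> c \<longleftrightarrow>
     (\<forall>g\<in>carrier G. \<forall>x\<in>X. cmod (c g x) = 1) \<and>
     (\<forall>g1\<in>carrier G. \<forall>g2\<in>carrier G. \<forall>x\<in>X.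
        c (g1 \<otimes>\<^bsub>G\<^esub> g2) x = c g1 (\<phi> g2 x) * c g2 x)"

definition continuous_cocycle ::
  "('g, 'b) monoid_scheme \<Rightarrow> 'g topology \<Rightarrow> 'x set \<Rightarrow> ('g \<Rightarrow> 'x \<Rightarrow> 'x) \<Rightarrow> ('g \<Rightarrow> 'x \<Rightarrow> complex) \<Rightarrow> bool" where
  "continuous_cocycle G T X \<phi> c \<longleftrightarrow> cocycle G X \<phi> c \<and>
     continuous_map (prod_topology T (discrete_topology X)) euclidean (\<lambda>(g, x). c g x)"

text \<open>A representation is given concretely by a space V of complex-valued functions
 (a complex vector space under pointwise operations), its norm N, and the action \<pi>.
 Unitary equivalence: a linear, norm-preserving bijection intertwining the actions
 (norm preservation of a linear map is equivalent to preservation of the inner product).\<close>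
definition unitarily_equivalent ::
  "('g, 'b) monoid_scheme \<Rightarrow>
   ('a \<Rightarrow> complex) set \<Rightarrow> (('a \<Rightarrow> complex) \<Rightarrow> real) \<Rightarrow> ('g \<Rightarrow> ('a \<Rightarrow> complex) \<Rightarrow> ('a \<Rightarrow> complex)) \<Rightarrow>
   ('c \<Rightarrow> complex) set \<Rightarrow> (('c \<Rightarrow> complex) \<Rightarrow> real) \<Rightarrow> ('g \<Rightarrow> ('c \<Rightarrow> complex) \<Rightarrow> ('c \<Rightarrow> complex)) \<Rightarrow> bool" where
  "unitarily_equivalent G V1 N1 \<pi>1 V2 N2 \<pi>2 \<longleftrightarrow>
     (\<exists>U. bij_betw U V1 V2 \<and>
        (\<forall>f\<in>V1. \<forall>h\<in>V1. \<forall>a b. U (\<lambda>x. a * f x + b * h x) = (\<lambda>y. a * U f y + b * U h y)) \<and>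
        (\<forall>f\<in>V1. N2 (U f) = N1 f) \<and>
        (\<forall>g\<in>carrier G. \<forall>f\<in>V1. U (\<pi>1 g f) = \<pi>2 g (U f)))"

definition l2 :: "'x set \<Rightarrow> ('x \<Rightarrow> complex) set" where
  "l2 X = {f. (\<forall>x. x \<notin> X \<longrightarrow> f x = 0) \<and> (\<lambda>x. (cmod (f x))\<^sup>2) summable_on X}"

definition l2norm :: "'x set \<Rightarrow> ('x \<Rightarrow> complex) \<Rightarrow> real" where
  "l2norm X f = sqrt (infsum (\<lambda>x. (cmod (f x))\<^sup>2) X)"

definition twisted_perm ::
  "('g, 'b) monoid_scheme \<Rightarrow> 'x set \<Rightarrow> ('g \<Rightarrow> 'x \<Rightarrow> 'x) \<Rightarrow> ('g \<Rightarrow> 'x \<Rightarrow> complex) \<Rightarrow>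
   'g \<Rightarrow> ('x \<Rightarrow> complex) \<Rightarrow> ('x \<Rightarrow> complex)" where
  "twisted_perm G X \<phi> c g f =
     (\<lambda>x. if x \<in> X then c (inv\<^bsub>G\<^esub> g) x * f (\<phi> (inv\<^bsub>G\<^esub> g) x) else 0)"

subsection \<open>Monomial representations Ind_H^G chi for open H (G/H discrete, counting measure)\<close>

definition ind_space :: "('g, 'b) monoid_scheme \<Rightarrow> 'g set \<Rightarrow> ('g \<Rightarrow> complex) \<Rightarrow> ('g \<Rightarrow> complex) set" where
  "ind_space G H chi = {f. (\<forall>g. g \<notin> carrier G \<longrightarrow> f g = 0) \<and>
      (\<forall>g\<in>carrier G. \<forall>h\<in>H. f (g \<otimes>\<^bsub>G\<^esub> h) = inverse (chi h) * f g) \<and>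
      (\<lambda>C. (cmod (f (SOME g. g \<in> C)))\<^sup>2) summable_on (lcosets\<^bsub>G\<^esub> H)}"

definition ind_normsq :: "('g, 'b) monoid_scheme \<Rightarrow> 'g set \<Rightarrow> ('g \<Rightarrow> complex) \<Rightarrow> real" where
  "ind_normsq G H f = infsum (\<lambda>C. (cmod (f (SOME g. g \<in> C)))\<^sup>2) (lcosets\<^bsub>G\<^esub> H)"

definition dsum_space ::
  "('g, 'b) monoid_scheme \<Rightarrow> 'i set \<Rightarrow> ('i \<Rightarrow> 'g set) \<Rightarrow> ('i \<Rightarrow> 'g \<Rightarrow> complex) \<Rightarrow> ('i \<times> 'g \<Rightarrow> complex) set" where
  "dsum_space G I H chi = {F. (\<forall>i x. i \<notin> I \<longrightarrow> F (i, x) = 0) \<and>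
      (\<forall>i\<in>I. (\<lambda>x. F (i, x)) \<in> ind_space G (H i) (chi i)) \<and>
      (\<lambda>i. ind_normsq G (H i) (\<lambda>x. F (i, x))) summable_on I}"

definition dsum_norm ::
  "('g, 'b) monoid_scheme \<Rightarrow> 'i set \<Rightarrow> ('i \<Rightarrow> 'g set) \<Rightarrow> ('i \<times> 'g \<Rightarrow> complex) \<Rightarrow> real" where
  "dsum_norm G I H F = sqrt (infsum (\<lambda>i. ind_normsq G (H i) (\<lambda>x. F (i, x))) I)"

definition dsum_action ::
  "('g, 'b) monoid_scheme \<Rightarrow> 'g \<Rightarrow> ('i \<times> 'g \<Rightarrow> complex) \<Rightarrow> ('i \<times> 'g \<Rightarrow> complex)" where
  "dsum_action G g F = (\<lambda>(i, x). if x \<in> carrier G then F (i, inv\<^bsub>G\<^esub> g \<otimes>\<^bsub>G\<^esub> x) else 0)"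

definition coset_union :: "('g, 'b) monoid_scheme \<Rightarrow> 'i set \<Rightarrow> ('i \<Rightarrow> 'g set) \<Rightarrow> ('i \<times> 'g set) set" where
  "coset_union G I H = {(i, C). i \<in> I \<and> C \<in> lcosets\<^bsub>G\<^esub> (H i)}"

definition coset_action :: "('g, 'b) monoid_scheme \<Rightarrow> 'g \<Rightarrow> ('i \<times> 'g set) \<Rightarrow> ('i \<times> 'g set)" where
  "coset_action G g p = (fst p, g <#\<^bsub>G\<^esub> snd p)"

end

theory Submission
  imports Defs
begin

lemma sigma_transfer:
  fixes F :: "'x \<Rightarrow> real"
  assumes bij: "bij_betw \<Phi> (Sigma A B) X" and nn: "\<And>x. x \<in> X \<Longrightarrow> F x \<ge> 0"
  shows "F summable_on X \<longleftrightarrow>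
     ((\<forall>i\<in>A. (\<lambda>C. F (\<Phi> (i, C))) summable_on B i) \<and>
      (\<lambda>i. infsum (\<lambda>C. F (\<Phi> (i, C))) (B i)) summable_on A)"
    and "F summable_on X \<Longrightarrow> infsum (\<lambda>i. infsum (\<lambda>C. F (\<Phi> (i, C))) (B i)) A = infsum F X"
proof -
  have eq: "F summable_on X \<longleftrightarrow> (\<lambda>p. F (\<Phi> p)) summable_on Sigma A B"
    using summable_on_reindex_bij_betw[OF bij, of F] by simp
  have nn': "\<And>p. p \<in> Sigma A B \<Longrightarrow> F (\<Phi> p) \<ge> 0"
    using bij nn by (auto simp: bij_betw_def)
  show "F summable_on X \<longleftrightarrow>
     ((\<forall>i\<in>A. (\<lambda>C. F (\<Phi> (i, C))) summable_on B i) \<and>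
      (\<lambda>i. infsum (\<lambda>C. F (\<Phi> (i, C))) (B i)) summable_on A)"
  proof
    assume s: "F summable_on X"
    hence s': "(\<lambda>p. F (\<Phi> p)) summable_on Sigma A B" using eq by simp
    have inner: "\<forall>i\<in>A. (\<lambda>C. F (\<Phi> (i, C))) summable_on B i"
    proof
      fix i assume i: "i \<in> A"
      have "(\<lambda>p. F (\<Phi> p)) summable_on Pair i ` B i"
        by (rule summable_on_subset_banach[OF s']) (use i in auto)
      thus "(\<lambda>C. F (\<Phi> (i, C))) summable_on B i"
        by (subst (asm) summable_on_reindex) (auto simp: inj_on_def o_def)
    qed
    moreover have "(\<lambda>i. infsum (\<lambda>C. F (\<Phi> (i, C))) (B i)) summable_on A"
      using summable_on_SigmaD[OF s'] inner by simp
    ultimately show "(\<forall>i\<in>A. (\<lambda>C. F (\<Phi> (i, C))) summable_on B i) \<and>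
      (\<lambda>i. infsum (\<lambda>C. F (\<Phi> (i, C))) (B i)) summable_on A" by blast
  next
    assume h: "(\<forall>i\<in>A. (\<lambda>C. F (\<Phi> (i, C))) summable_on B i) \<and>
      (\<lambda>i. infsum (\<lambda>C. F (\<Phi> (i, C))) (B i)) summable_on A"
    have "(\<lambda>p. F (\<Phi> p)) summable_on Sigma A B"
      apply (rule summable_on_SigmaI[where g="\<lambda>i. infsum (\<lambda>C. F (\<Phi> (i, C))) (B i)"])
      using h nn' by auto
    thus "F summable_on X" using eq by simp
  qed
  show "F summable_on X \<Longrightarrow> infsum (\<lambda>i. infsum (\<lambda>C. F (\<Phi> (i, C))) (B i)) A = infsum F X"
  proof -
    assume s: "F summable_on X"
    hence s': "(\<lambda>p. F (\<Phi> p)) summable_on Sigma A B" using eq by simp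
    have "infsum (\<lambda>i. infsum (\<lambda>C. F (\<Phi> (i, C))) (B i)) A = infsum (\<lambda>p. F (\<Phi> p)) (Sigma A B)"
      using infsum_Sigma_banach[OF s'] by simp
    also have "\<dots> = infsum F X" using infsum_reindex_bij_betw[OF bij, of F] by simp
    finally show ?thesis .
  qed
qed

locale core =
  fixes G :: "('g, 'b) monoid_scheme" (structure) and X :: "'x set" and \<phi> :: "'g \<Rightarrow> 'x \<Rightarrow> 'x"
    and c :: "'g \<Rightarrow> 'x \<Rightarrow> complex" and I :: "'i set" and xr :: "'i \<Rightarrow> 'x"
    and H :: "'i \<Rightarrow> 'g set" and chi :: "'i \<Rightarrow> 'g \<Rightarrow> complex"
  assumes grp: "group G" and act: "is_action G X \<phi>" and coc: "cocycle G X \<phi> c"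
    and xr_in: "i \<in> I \<Longrightarrow> xr i \<in> X"
    and orb: "x \<in> X \<Longrightarrow> \<exists>i\<in>I. \<exists>g\<in>carrier G. x = \<phi> g (xr i)"
    and orb_uniq: "i \<in> I \<Longrightarrow> j \<in> I \<Longrightarrow> g \<in> carrier G \<Longrightarrow> \<phi> g (xr i) = xr j \<Longrightarrow> i = j"
    and stab: "i \<in> I \<Longrightarrow> H i = {g \<in> carrier G. \<phi> g (xr i) = xr i}"
    and chi: "i \<in> I \<Longrightarrow> h \<in> H i \<Longrightarrow> chi i h = inverse (c h (xr i))"
begin

interpretation group G by (rule grp)

lemma act_in: "g \<in> carrier G \<Longrightarrow> x \<in> X \<Longrightarrow> \<phi> g x \<in> X"
  and act_one: "x \<in> X \<Longrightarrow> \<phi> \<one> x = x"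
  and act_mult: "g1 \<in> carrier G \<Longrightarrow> g2 \<in> carrier G \<Longrightarrow> x \<in> X \<Longrightarrow> \<phi> (g1 \<otimes> g2) x = \<phi> g1 (\<phi> g2 x)"
  using act by (auto simp: is_action_def)

lemma c_norm: "g \<in> carrier G \<Longrightarrow> x \<in> X \<Longrightarrow> cmod (c g x) = 1"
  and c_mult: "g1 \<in> carrier G \<Longrightarrow> g2 \<in> carrier G \<Longrightarrow> x \<in> X \<Longrightarrow> c (g1 \<otimes> g2) x = c g1 (\<phi> g2 x) * c g2 x"
  using coc by (auto simp: cocycle_def)

lemma c_nz: "g \<in> carrier G \<Longrightarrow> x \<in> X \<Longrightarrow> c g x \<noteq> 0"
  using c_norm by fastforce

lemma H_sub: "i \<in> I \<Longrightarrow> subgroup (H i) G"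
proof -
  assume i: "i \<in> I"
  show ?thesis
  proof
    show "H i \<subseteq> carrier G" using stab[OF i] by auto
    show "\<And>x y. x \<in> H i \<Longrightarrow> y \<in> H i \<Longrightarrow> x \<otimes> y \<in> H i"
      using stab[OF i] act_mult xr_in[OF i] by auto
    show "\<one> \<in> H i" using stab[OF i] act_one xr_in[OF i] by auto
    show "\<And>x. x \<in> H i \<Longrightarrow> inv x \<in> H i"
    proof -
      fix x assume x: "x \<in> H i"
      hence xc: "x \<in> carrier G" and fx: "\<phi> x (xr i) = xr i" using stab[OF i] by auto
      have "\<phi> (inv x) (xr i) = \<phi> (inv x) (\<phi> x (xr i))" using fx by simp
      also have "\<dots> = \<phi> (inv x \<otimes> x) (xr i)" using act_mult[of "inv x" x "xr i"] xc xr_in[OF i] by simp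
      also have "\<dots> = xr i" using xc act_one xr_in[OF i] by simp
      finally show "inv x \<in> H i" using stab[OF i] xc by auto
    qed
  qed
qed

lemma chi_mult: "i \<in> I \<Longrightarrow> h1 \<in> H i \<Longrightarrow> h2 \<in> H i \<Longrightarrow> chi i (h1 \<otimes> h2) = chi i h1 * chi i h2"
proof -
  assume i: "i \<in> I" and h: "h1 \<in> H i" "h2 \<in> H i"
  have c: "h1 \<in> carrier G" "h2 \<in> carrier G" "\<phi> h2 (xr i) = xr i" using h stab[OF i] by auto
  have "h1 \<otimes> h2 \<in> H i" using H_sub[OF i] h by (simp add: subgroup.m_closed)
  thus ?thesis using chi[OF i] h c c_mult[OF c(1,2) xr_in[OF i]] by simp
qed

lemma chi_norm: "i \<in> I \<Longrightarrow> h \<in> H i \<Longrightarrow> cmod (chi i h) = 1"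
  using chi stab c_norm xr_in by (auto simp: norm_inverse)

definition rep :: "'g set \<Rightarrow> 'g" where "rep C = (SOME g. g \<in> C)"
definition \<Phi> :: "'i \<times> 'g set \<Rightarrow> 'x" where "\<Phi> p = \<phi> (rep (snd p)) (xr (fst p))"
definition SS where "SS = Sigma I (\<lambda>i. lcosets (H i))"

lemma rep_props:
  assumes i: "i \<in> I" and C: "C \<in> lcosets (H i)"
  shows "rep C \<in> C" "rep C \<in> carrier G" "C = rep C <# H i"
proof -
  obtain a where a: "a \<in> carrier G" "C = a <# H i" using C by (auto simp: LCOSETS_def)
  have "a \<in> C" using a lcos_self H_sub[OF i] by simp
  thus r: "rep C \<in> C" unfolding rep_def by (rule someI)
  thus "rep C \<in> carrier G" using a l_coset_carrier H_sub[OF i] by blast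
  show "C = rep C <# H i" using a r l_repr_independence H_sub[OF i] by blast
qed

lemma coset_in: "i \<in> I \<Longrightarrow> g \<in> carrier G \<Longrightarrow> g <# H i \<in> lcosets (H i)"
  by (auto simp: LCOSETS_def)

lemma rep_coset:
  assumes i: "i \<in> I" and g: "g \<in> carrier G"
  shows "inv g \<otimes> rep (g <# H i) \<in> H i" "g \<otimes> (inv g \<otimes> rep (g <# H i)) = rep (g <# H i)"
proof -
  have r: "rep (g <# H i) \<in> g <# H i" using rep_props(1)[OF i coset_in[OF i g]] .
  show "inv g \<otimes> rep (g <# H i) \<in> H i"
    using subgroup.lcos_module_imp[OF H_sub[OF i] grp g r] .
  show "g \<otimes> (inv g \<otimes> rep (g <# H i)) = rep (g <# H i)"
    using rep_props(2)[OF i coset_in[OF i g]] g by (simp add: m_assoc[symmetric])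
qed

lemma Phi_coset:
  assumes i: "i \<in> I" and g: "g \<in> carrier G"
  shows "\<Phi> (i, g <# H i) = \<phi> g (xr i)"
proof -
  define h where "h = inv g \<otimes> rep (g <# H i)"
  have h: "h \<in> H i" "g \<otimes> h = rep (g <# H i)" using rep_coset[OF i g] h_def by auto
  have hc: "h \<in> carrier G" "\<phi> h (xr i) = xr i" using h stab[OF i] by auto
  have "\<Phi> (i, g <# H i) = \<phi> (g \<otimes> h) (xr i)" using h by (simp add: \<Phi>_def)
  also have "\<dots> = \<phi> g (xr i)" using act_mult[OF g hc(1) xr_in[OF i]] hc by simp
  finally show ?thesis .
qed

lemma Phi_bij: "bij_betw \<Phi> SS X"
proof (rule bij_betw_imageI)
  show "inj_on \<Phi> SS"
  proof (rule inj_onI)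
    fix p q assume p: "p \<in> SS" and q: "q \<in> SS" and e: "\<Phi> p = \<Phi> q"
    obtain i C where pi: "p = (i, C)" "i \<in> I" "C \<in> lcosets (H i)" using p by (auto simp: SS_def)
    obtain j D where qj: "q = (j, D)" "j \<in> I" "D \<in> lcosets (H j)" using q by (auto simp: SS_def)
    note ri = rep_props[OF pi(2,3)] and rj = rep_props[OF qj(2,3)]
    have e': "\<phi> (rep C) (xr i) = \<phi> (rep D) (xr j)" using e pi qj by (simp add: \<Phi>_def)
    have "\<phi> (inv (rep D) \<otimes> rep C) (xr i) = \<phi> (inv (rep D)) (\<phi> (rep D) (xr j))"
      using e' act_mult ri rj xr_in pi qj by simp
    also have "\<dots> = xr j" using act_mult[symmetric] ri rj xr_in qj act_one by simp
    finally have ee: "\<phi> (inv (rep D) \<otimes> rep C) (xr i) = xr j" .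
    hence ij: "i = j" using orb_uniq[OF pi(2) qj(2)] ri rj by (meson inv_closed m_closed)
    have "\<phi> (inv (rep D) \<otimes> rep C) (xr i) = xr i" using ee ij by simp
    hence "inv (rep D) \<otimes> rep C \<in> H i" using stab[OF pi(2)] ri rj by auto
    hence "rep C \<in> rep D <# H i"
      using subgroup.lcos_module_rev[OF H_sub[OF pi(2)] grp] ri rj by simp
    hence "rep D <# H i = rep C <# H i" using l_repr_independence H_sub[OF pi(2)] rj by blast
    hence "C = D" using ri rj ij by simp
    thus "p = q" using pi qj ij by simp
  qed
  show "\<Phi> ` SS = X"
  proof
    show "\<Phi> ` SS \<subseteq> X"
      using rep_props act_in xr_in by (auto simp: SS_def \<Phi>_def)
    show "X \<subseteq> \<Phi> ` SS"
    proof
      fix x assume "x \<in> X"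
      then obtain i g where ig: "i \<in> I" "g \<in> carrier G" "x = \<phi> g (xr i)" using orb by blast
      hence "x = \<Phi> (i, g <# H i)" using Phi_coset by simp
      moreover have "(i, g <# H i) \<in> SS" using ig coset_in by (simp add: SS_def)
      ultimately show "x \<in> \<Phi> ` SS" by blast
    qed
  qed
qed


definition V :: "('x \<Rightarrow> complex) \<Rightarrow> ('i \<times> 'g \<Rightarrow> complex)" where
  "V F = (\<lambda>(i, g). if i \<in> I \<and> g \<in> carrier G then c g (xr i) * F (\<phi> g (xr i)) else 0)"

definition W :: "('i \<times> 'g \<Rightarrow> complex) \<Rightarrow> ('x \<Rightarrow> complex)" where
  "W D = (\<lambda>x. if x \<in> X then (case inv_into SS \<Phi> x of (i, C) \<Rightarrow> D (i, rep C) / c (rep C) (xr i)) else 0)"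

definition crel where
  "crel D i \<longleftrightarrow> (\<forall>g\<in>carrier G. \<forall>h\<in>H i. D (i, g \<otimes> h) = inverse (chi i h) * D (i, g))"

lemma inv_Phi:
  assumes i: "i \<in> I" and g: "g \<in> carrier G"
  shows "inv_into SS \<Phi> (\<phi> g (xr i)) = (i, g <# H i)"
proof -
  have "(i, g <# H i) \<in> SS" using i g coset_in by (simp add: SS_def)
  moreover have "inj_on \<Phi> SS" using Phi_bij by (simp add: bij_betw_def)
  ultimately show ?thesis using Phi_coset[OF i g] inv_into_f_f by metis
qed

lemma WD_at:
  assumes i: "i \<in> I" and g: "g \<in> carrier G" and cr: "crel D i"
  shows "W D (\<phi> g (xr i)) = D (i, g) / c g (xr i)"
proof -
  define r where "r = rep (g <# H i)"
  define h where "h = inv g \<otimes> r"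
  have h: "h \<in> H i" "g \<otimes> h = r" using rep_coset[OF i g] h_def r_def by auto
  have hc: "h \<in> carrier G" "\<phi> h (xr i) = xr i" using h stab[OF i] by auto
  have x: "\<phi> g (xr i) \<in> X" using act_in g xr_in i by simp
  have "W D (\<phi> g (xr i)) = D (i, r) / c r (xr i)"
    using x inv_Phi[OF i g] by (simp add: W_def r_def)
  also have "D (i, r) = c h (xr i) * D (i, g)"
    using cr g h chi[OF i h(1)] by (auto simp: crel_def)
  also have "c r (xr i) = c g (xr i) * c h (xr i)"
    using c_mult[OF g hc(1) xr_in[OF i]] hc h by simp
  finally show ?thesis using c_nz[OF hc(1) xr_in[OF i]] by simp
qed

lemma crel_V: "i \<in> I \<Longrightarrow> crel (V F) i"
  unfolding crel_def
proof (intro ballI)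
  fix g h assume i: "i \<in> I" and g: "g \<in> carrier G" and h: "h \<in> H i"
  have hc: "h \<in> carrier G" "\<phi> h (xr i) = xr i" using h stab[OF i] by auto
  have "V F (i, g \<otimes> h) = c (g \<otimes> h) (xr i) * F (\<phi> (g \<otimes> h) (xr i))"
    using i g hc by (simp add: V_def)
  also have "\<dots> = c h (xr i) * (c g (xr i) * F (\<phi> g (xr i)))"
    using c_mult[OF g hc(1) xr_in[OF i]] act_mult[OF g hc(1) xr_in[OF i]] hc by simp
  also have "\<dots> = inverse (chi i h) * V F (i, g)"
    using chi[OF i h] i g by (simp add: V_def)
  finally show "V F (i, g \<otimes> h) = inverse (chi i h) * V F (i, g)" .
qed

lemma V_abs: "i \<in> I \<Longrightarrow> C \<in> lcosets (H i) \<Longrightarrow> cmod (V F (i, rep C)) = cmod (F (\<Phi> (i, C)))"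
  using rep_props c_norm act_in xr_in by (simp add: V_def \<Phi>_def norm_mult)

lemma W_abs: "i \<in> I \<Longrightarrow> C \<in> lcosets (H i) \<Longrightarrow> crel D i \<Longrightarrow> cmod (W D (\<Phi> (i, C))) = cmod (D (i, rep C))"
  using rep_props WD_at c_norm xr_in by (simp add: \<Phi>_def norm_divide)

lemma some_rep: "(SOME g. g \<in> C) = rep C" by (simp add: rep_def)

lemma SS_sigma: "bij_betw \<Phi> (Sigma I (\<lambda>i. lcosets (H i))) X"
  using Phi_bij by (simp add: SS_def)

lemma V_in_norm:
  assumes F: "F \<in> l2 X"
  shows "V F \<in> dsum_space G I H chi" "dsum_norm G I H (V F) = l2norm X F"
proof -
  let ?F = "\<lambda>x. (cmod (F x))\<^sup>2"
  have s: "?F summable_on X" using F by (simp add: l2_def)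
  note st = sigma_transfer[OF SS_sigma, of ?F]
  have inner: "\<forall>i\<in>I. (\<lambda>C. ?F (\<Phi> (i, C))) summable_on lcosets (H i)"
   and outer: "(\<lambda>i. infsum (\<lambda>C. ?F (\<Phi> (i, C))) (lcosets (H i))) summable_on I"
    using st(1) s by auto
  have eqi: "\<And>i. i \<in> I \<Longrightarrow> ind_normsq G (H i) (\<lambda>x. V F (i, x)) = infsum (\<lambda>C. ?F (\<Phi> (i, C))) (lcosets (H i))"
    unfolding ind_normsq_def some_rep by (rule infsum_cong) (simp add: V_abs)
  show "V F \<in> dsum_space G I H chi"
    unfolding dsum_space_def
  proof (intro CollectI conjI allI impI ballI)
    show "\<And>i x. i \<notin> I \<Longrightarrow> V F (i, x) = 0" by (simp add: V_def)
    fix i assume i: "i \<in> I"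
    show "(\<lambda>x. V F (i, x)) \<in> ind_space G (H i) (chi i)"
      unfolding ind_space_def some_rep
    proof (intro CollectI conjI allI impI ballI)
      show "\<And>g. g \<notin> carrier G \<Longrightarrow> V F (i, g) = 0" by (simp add: V_def)
      show "\<And>g h. g \<in> carrier G \<Longrightarrow> h \<in> H i \<Longrightarrow> V F (i, g \<otimes> h) = inverse (chi i h) * V F (i, g)"
        using crel_V[OF i] by (simp add: crel_def)
      show "(\<lambda>C. (cmod (V F (i, rep C)))\<^sup>2) summable_on lcosets (H i)"
        using inner i by (subst summable_on_cong[where g="\<lambda>C. ?F (\<Phi> (i, C))"]) (auto simp: V_abs)
    qed
  next
    show "(\<lambda>i. ind_normsq G (H i) (\<lambda>x. V F (i, x))) summable_on I"
      using outer eqi by (subst summable_on_cong) auto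
  qed
  have "dsum_norm G I H (V F) = sqrt (infsum (\<lambda>i. infsum (\<lambda>C. ?F (\<Phi> (i, C))) (lcosets (H i))) I)"
    unfolding dsum_norm_def using eqi by (simp cong: infsum_cong)
  also have "\<dots> = l2norm X F" using st(2)[OF _ s] by (simp add: l2norm_def)
  finally show "dsum_norm G I H (V F) = l2norm X F" .
qed

lemma dsum_crel: "D \<in> dsum_space G I H chi \<Longrightarrow> i \<in> I \<Longrightarrow> crel D i"
  by (simp add: dsum_space_def ind_space_def crel_def)

lemma W_in:
  assumes D: "D \<in> dsum_space G I H chi"
  shows "W D \<in> l2 X"
proof -
  let ?F = "\<lambda>x. (cmod (W D x))\<^sup>2"
  note st = sigma_transfer[OF SS_sigma, of ?F]
  have eqC: "\<And>i C. i \<in> I \<Longrightarrow> C \<in> lcosets (H i) \<Longrightarrow> ?F (\<Phi> (i, C)) = (cmod (D (i, rep C)))\<^sup>2"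
    using W_abs dsum_crel[OF D] by simp
  have inner: "\<forall>i\<in>I. (\<lambda>C. ?F (\<Phi> (i, C))) summable_on lcosets (H i)"
  proof
    fix i assume i: "i \<in> I"
    have "(\<lambda>C. (cmod (D (i, rep C)))\<^sup>2) summable_on lcosets (H i)"
      using D i by (simp add: dsum_space_def ind_space_def some_rep)
    thus "(\<lambda>C. ?F (\<Phi> (i, C))) summable_on lcosets (H i)"
      using eqC i by (subst summable_on_cong) auto
  qed
  have "(\<lambda>i. ind_normsq G (H i) (\<lambda>x. D (i, x))) summable_on I"
    using D by (simp add: dsum_space_def)
  hence outer: "(\<lambda>i. infsum (\<lambda>C. ?F (\<Phi> (i, C))) (lcosets (H i))) summable_on I"
    using eqC by (subst summable_on_cong[where g="\<lambda>i. ind_normsq G (H i) (\<lambda>x. D (i, x))"])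
       (auto simp: ind_normsq_def some_rep intro: infsum_cong)
  have "?F summable_on X" using st(1) inner outer by simp
  thus ?thesis by (simp add: l2_def W_def)
qed

lemma VW: assumes D: "D \<in> dsum_space G I H chi" shows "V (W D) = D"
proof (rule ext, clarify)
  fix i g
  show "V (W D) (i, g) = D (i, g)"
  proof (cases "i \<in> I \<and> g \<in> carrier G")
    case True
    thus ?thesis using WD_at dsum_crel[OF D] c_nz xr_in by (simp add: V_def)
  next
    case False
    thus ?thesis using D by (auto simp: V_def dsum_space_def ind_space_def)
  qed
qed

lemma WV: assumes F: "F \<in> l2 X" shows "W (V F) = F"
proof
  fix x
  show "W (V F) x = F x"
  proof (cases "x \<in> X")
    case True
    then obtain i g where ig: "i \<in> I" "g \<in> carrier G" "x = \<phi> g (xr i)" using orb by blast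
    thus ?thesis using WD_at[OF ig(1,2) crel_V[OF ig(1)]] c_nz xr_in by (simp add: V_def)
  next
    case False
    thus ?thesis using F by (simp add: W_def l2_def)
  qed
qed


lemma V_lin: "V (\<lambda>x. a * f x + b * h x) = (\<lambda>y. a * V f y + b * V h y)"
  by (rule ext) (auto simp: V_def algebra_simps)

lemma W_lin: "W (\<lambda>x. a * f x + b * h x) = (\<lambda>y. a * W f y + b * W h y)"
  by (rule ext) (auto simp: W_def add_divide_distrib split: prod.split)

lemma V_intertw:
  assumes g: "g \<in> carrier G"
  shows "V (twisted_perm G X \<phi> c g F) = dsum_action G g (V F)"
proof (rule ext, clarify)
  fix i y
  show "V (twisted_perm G X \<phi> c g F) (i, y) = dsum_action G g (V F) (i, y)"
  proof (cases "i \<in> I \<and> y \<in> carrier G")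
    case True
    hence i: "i \<in> I" and y: "y \<in> carrier G" by auto
    have gi: "inv g \<in> carrier G" using g by simp
    have xi: "xr i \<in> X" using xr_in[OF i] .
    have "V (twisted_perm G X \<phi> c g F) (i, y) = c y (xr i) * (c (inv g) (\<phi> y (xr i)) * F (\<phi> (inv g) (\<phi> y (xr i))))"
      using i y act_in[OF y xi] by (simp add: V_def twisted_perm_def)
    also have "\<dots> = c (inv g \<otimes> y) (xr i) * F (\<phi> (inv g \<otimes> y) (xr i))"
      using c_mult[OF gi y xi] act_mult[OF gi y xi] by simp
    also have "\<dots> = dsum_action G g (V F) (i, y)"
      using i y gi by (simp add: dsum_action_def V_def)
    finally show ?thesis .
  next
    case False
    thus ?thesis by (auto simp: V_def dsum_action_def)
  qed
qed

lemma W_intertw: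
  assumes g: "g \<in> carrier G" and D: "D \<in> dsum_space G I H chi"
  shows "W (dsum_action G g D) = twisted_perm G X \<phi> c g (W D)"
proof
  fix x
  show "W (dsum_action G g D) x = twisted_perm G X \<phi> c g (W D) x"
  proof (cases "x \<in> X")
    case False
    thus ?thesis by (simp add: W_def twisted_perm_def)
  next
    case True
    then obtain i y where iy: "i \<in> I" "y \<in> carrier G" "x = \<phi> y (xr i)" using orb by blast
    have gi: "inv g \<in> carrier G" using g by simp
    have xi: "xr i \<in> X" using xr_in[OF iy(1)] .
    have cr: "crel (dsum_action G g D) i"
      unfolding crel_def
    proof (intro ballI)
      fix u h assume u: "u \<in> carrier G" and h: "h \<in> H i"
      have hc: "h \<in> carrier G" using h stab[OF iy(1)] by auto
      have "dsum_action G g D (i, u \<otimes> h) = D (i, (inv g \<otimes> u) \<otimes> h)"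
        using u hc gi by (simp add: dsum_action_def m_assoc)
      also have "\<dots> = inverse (chi i h) * D (i, inv g \<otimes> u)"
        using dsum_crel[OF D iy(1)] h u gi by (simp add: crel_def)
      finally show "dsum_action G g D (i, u \<otimes> h) = inverse (chi i h) * dsum_action G g D (i, u)"
        using u by (simp add: dsum_action_def)
    qed
    have "W (dsum_action G g D) x = D (i, inv g \<otimes> y) / c y (xr i)"
      using WD_at[OF iy(1,2) cr] iy by (simp add: dsum_action_def)
    also have "\<dots> = c (inv g) x * (D (i, inv g \<otimes> y) / c (inv g \<otimes> y) (xr i))"
      using c_mult[OF gi iy(2) xi] c_nz[OF gi, of x] True c_nz[OF iy(2) xi] iy(3) by (simp add: field_simps)
    also have "\<dots> = c (inv g) x * W D (\<phi> (inv g \<otimes> y) (xr i))"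
      using WD_at[OF iy(1) _ dsum_crel[OF D iy(1)], of "inv g \<otimes> y"] gi iy by simp
    also have "\<dots> = twisted_perm G X \<phi> c g (W D) x"
      using True act_mult[OF gi iy(2) xi] iy by (simp add: twisted_perm_def)
    finally show ?thesis .
  qed
qed

lemma equiv1:
  "unitarily_equivalent G (l2 X) (l2norm X) (twisted_perm G X \<phi> c)
     (dsum_space G I H chi) (dsum_norm G I H) (dsum_action G)"
  unfolding unitarily_equivalent_def
proof (intro exI[of _ V] conjI ballI allI)
  show "bij_betw V (l2 X) (dsum_space G I H chi)"
    by (rule bij_betw_byWitness[where f'=W]) (auto simp: WV VW V_in_norm W_in)
  show "\<And>f h a b. V (\<lambda>x. a * f x + b * h x) = (\<lambda>y. a * V f y + b * V h y)" by (rule V_lin)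
  show "\<And>f. f \<in> l2 X \<Longrightarrow> dsum_norm G I H (V f) = l2norm X f" by (rule V_in_norm(2))
  show "\<And>g f. g \<in> carrier G \<Longrightarrow> V (twisted_perm G X \<phi> c g f) = dsum_action G g (V f)"
    by (rule V_intertw)
qed

lemma equiv2:
  "unitarily_equivalent G (dsum_space G I H chi) (dsum_norm G I H) (dsum_action G)
     (l2 X) (l2norm X) (twisted_perm G X \<phi> c)"
  unfolding unitarily_equivalent_def
proof (intro exI[of _ W] conjI ballI allI)
  show "bij_betw W (dsum_space G I H chi) (l2 X)"
    by (rule bij_betw_byWitness[where f'=V]) (auto simp: WV VW V_in_norm W_in)
  show "\<And>f h a b. W (\<lambda>x. a * f x + b * h x) = (\<lambda>y. a * W f y + b * W h y)" by (rule W_lin)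
  show "\<And>f. f \<in> dsum_space G I H chi \<Longrightarrow> l2norm X (W f) = dsum_norm G I H f"
    by (metis VW V_in_norm(2) W_in)
  show "\<And>g f. g \<in> carrier G \<Longrightarrow> f \<in> dsum_space G I H chi \<Longrightarrow> W (dsum_action G g f) = twisted_perm G X \<phi> c g (W f)"
    by (rule W_intertw)
qed

end


lemma slice_cont:
  assumes cm: "continuous_map (prod_topology T (discrete_topology X)) Y (\<lambda>(g, x). f g x)"
    and x: "x \<in> X"
  shows "continuous_map T Y (\<lambda>g. f g x)"
proof -
  have "continuous_map T (prod_topology T (discrete_topology X)) (\<lambda>g. (g, x))"
    by (intro continuous_map_pairedI continuous_map_id[unfolded id_def] continuous_map_const[THEN iffD2]) (use x in auto)
  from continuous_map_compose[OF this cm] show ?thesis by (simp add: o_def)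
qed

lemma part1:
  fixes G :: "('g, 'b) monoid_scheme" (structure) and T :: "'g topology"
    and X :: "'x set" and \<phi> and c
  assumes tg: "topological_group G T"
    and ca: "continuous_action G T X \<phi>" and cc: "continuous_cocycle G T X \<phi> c"
  shows "\<exists>(I :: 'x set) H chi.
          (\<forall>i\<in>I. open_subgroup G T (H i) \<and> unitary_character G T (H i) (chi i)) \<and>
          unitarily_equivalent G
            (l2 X) (l2norm X) (twisted_perm G X \<phi> c)
            (dsum_space G I H chi) (dsum_norm G I H) (dsum_action G)"
proof -
  have grp: "group G" and top: "topspace T = carrier G" using tg by (auto simp: topological_group_def)
  interpret group G by (rule grp)
  have act: "is_action G X \<phi>" using ca by (simp add: continuous_action_def)
  have coc: "cocycle G X \<phi> c" using cc by (simp add: continuous_cocycle_def)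
  have a_in: "\<And>g x. g \<in> carrier G \<Longrightarrow> x \<in> X \<Longrightarrow> \<phi> g x \<in> X"
   and a_one: "\<And>x. x \<in> X \<Longrightarrow> \<phi> \<one> x = x"
   and a_mult: "\<And>g1 g2 x. g1 \<in> carrier G \<Longrightarrow> g2 \<in> carrier G \<Longrightarrow> x \<in> X \<Longrightarrow> \<phi> (g1 \<otimes> g2) x = \<phi> g1 (\<phi> g2 x)"
    using act by (auto simp: is_action_def)
  define orbit where "orbit x = {\<phi> g x | g. g \<in> carrier G}" for x
  define r where "r x = (SOME y. y \<in> orbit x)" for x
  have self: "\<And>x. x \<in> X \<Longrightarrow> x \<in> orbit x"
  proof -
    fix x assume x: "x \<in> X"
    have "x = \<phi> \<one> x" using a_one[OF x] by simp
    thus "x \<in> orbit x" unfolding orbit_def using one_closed by blast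
  qed
  have osub: "\<And>x. x \<in> X \<Longrightarrow> orbit x \<subseteq> X" unfolding orbit_def using a_in by auto
  have oeq: "\<And>x y. x \<in> X \<Longrightarrow> y \<in> orbit x \<Longrightarrow> orbit y = orbit x"
  proof -
    fix x y assume x: "x \<in> X" and y: "y \<in> orbit x"
    then obtain g where g: "g \<in> carrier G" "y = \<phi> g x" by (auto simp: orbit_def)
    show "orbit y = orbit x"
    proof
      show "orbit y \<subseteq> orbit x"
      proof
        fix z assume "z \<in> orbit y"
        then obtain k where k: "k \<in> carrier G" "z = \<phi> k y" by (auto simp: orbit_def)
        hence "z = \<phi> (k \<otimes> g) x" using a_mult g x by simp
        moreover have "k \<otimes> g \<in> carrier G" using k g by simp
        ultimately show "z \<in> orbit x" unfolding orbit_def by blast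
      qed
      show "orbit x \<subseteq> orbit y"
      proof
        fix z assume "z \<in> orbit x"
        then obtain k where k: "k \<in> carrier G" "z = \<phi> k x" by (auto simp: orbit_def)
        have "\<phi> (k \<otimes> inv g) y = \<phi> k (\<phi> (inv g) (\<phi> g x))" using a_mult g x k a_in
          by simp
        also have "\<dots> = \<phi> k (\<phi> (inv g \<otimes> g) x)" using a_mult[of "inv g" g x] g x by simp
        also have "\<dots> = z" using g x k a_one by simp
        finally have "z = \<phi> (k \<otimes> inv g) y" by simp
        moreover have "k \<otimes> inv g \<in> carrier G" using k g by simp
        ultimately show "z \<in> orbit y" unfolding orbit_def by blast
      qed
    qed
  qed
  have r_in: "\<And>x. x \<in> X \<Longrightarrow> r x \<in> orbit x" unfolding r_def using self by (rule someI)
  define I where "I = r ` X"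
  define H where "H i = {g \<in> carrier G. \<phi> g i = i}" for i
  define chi where "chi i h = inverse (c h i)" for i h
  interpret core G X \<phi> c I id H chi
  proof (rule core.intro)
    show "group G" by (rule grp)
    show "is_action G X \<phi>" by (rule act)
    show "cocycle G X \<phi> c" by (rule coc)
    show "\<And>i. i \<in> I \<Longrightarrow> id i \<in> X" using r_in osub by (auto simp: I_def)
    show "\<And>x. x \<in> X \<Longrightarrow> \<exists>i\<in>I. \<exists>g\<in>carrier G. x = \<phi> g (id i)"
    proof -
      fix x assume x: "x \<in> X"
      have "x \<in> orbit (r x)" using oeq[OF x r_in[OF x]] self[OF x] by simp
      then obtain g where "g \<in> carrier G" "x = \<phi> g (r x)" unfolding orbit_def by blast
      moreover have "r x \<in> I" using x by (simp add: I_def)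
      ultimately show "\<exists>i\<in>I. \<exists>g\<in>carrier G. x = \<phi> g (id i)" by auto
    qed
    show "\<And>i j g. i \<in> I \<Longrightarrow> j \<in> I \<Longrightarrow> g \<in> carrier G \<Longrightarrow> \<phi> g (id i) = id j \<Longrightarrow> i = j"
    proof -
      fix i j g assume i: "i \<in> I" and j: "j \<in> I" and g: "g \<in> carrier G" and e: "\<phi> g (id i) = id j"
      obtain x where x: "x \<in> X" "i = r x" using i by (auto simp: I_def)
      obtain y where y: "y \<in> X" "j = r y" using j by (auto simp: I_def)
      have iX: "i \<in> X" using x r_in osub by auto
      have "j \<in> orbit i" using e g unfolding orbit_def by auto
      hence "orbit j = orbit i" using oeq[OF iX] by blast
      moreover have "orbit i = orbit x" using oeq[OF x(1) r_in[OF x(1)]] x(2) by simp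
      moreover have "orbit j = orbit y" using oeq[OF y(1) r_in[OF y(1)]] y(2) by simp
      ultimately have "orbit x = orbit y" by simp
      thus "i = j" using x y by (simp add: r_def)
    qed
    show "\<And>i. i \<in> I \<Longrightarrow> H i = {g \<in> carrier G. \<phi> g (id i) = id i}" by (simp add: H_def)
    show "\<And>i h. i \<in> I \<Longrightarrow> h \<in> H i \<Longrightarrow> chi i h = inverse (c h (id i))" by (simp add: chi_def)
  qed
  have IX: "\<And>i. i \<in> I \<Longrightarrow> i \<in> X" using xr_in by simp
  have props: "\<forall>i\<in>I. open_subgroup G T (H i) \<and> unitary_character G T (H i) (chi i)"
  proof
    fix i assume i: "i \<in> I"
    have iX: "i \<in> X" using IX[OF i] .
    have cmA: "continuous_map T (discrete_topology X) (\<lambda>g. \<phi> g i)"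
      using ca unfolding continuous_action_def by (intro slice_cont[OF _ iX, where f=\<phi>]) simp
    have "openin T {g \<in> topspace T. \<phi> g i \<in> {i}}"
      by (rule openin_continuous_map_preimage[OF cmA]) (use iX in simp)
    hence op: "openin T (H i)" using top by (simp add: H_def)
    have cmc: "continuous_map T euclidean (\<lambda>g. c g i)"
      using cc unfolding continuous_cocycle_def by (intro slice_cont[OF _ iX, where f=c]) simp
    have nz: "\<And>g. g \<in> topspace T \<Longrightarrow> c g i \<noteq> 0" using c_nz iX top by simp
    have "continuous_map T euclidean (\<lambda>g. inverse (c g i))"
      using cmc nz unfolding continuous_map_atin limitin_canonical_iff
      by (metis tendsto_inverse)
    hence cont: "continuous_map (subtopology T (H i)) euclidean (chi i)"
      unfolding chi_def[abs_def] by (rule continuous_map_from_subtopology)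
    show "open_subgroup G T (H i) \<and> unitary_character G T (H i) (chi i)"
      using H_sub[OF i] op cont chi_norm[OF i] chi_mult[OF i]
      by (simp add: open_subgroup_def unitary_character_def)
  qed
  show ?thesis using props equiv1 by blast
qed


lemma part2:
  fixes G :: "('g, 'b) monoid_scheme" (structure) and T :: "'g topology"
    and I :: "'i set" and H and chi
  assumes tg: "topological_group G T"
    and props: "\<forall>i\<in>I. open_subgroup G T (H i) \<and> unitary_character G T (H i) (chi i)"
  shows "\<exists>c. cocycle G (coset_union G I H) (coset_action G) c \<and>
          unitarily_equivalent G
            (dsum_space G I H chi) (dsum_norm G I H) (dsum_action G)
            (l2 (coset_union G I H)) (l2norm (coset_union G I H))
            (twisted_perm G (coset_union G I H) (coset_action G) c)"
proof -
  have grp: "group G" using tg by (auto simp: topological_group_def)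
  interpret group G by (rule grp)
  have sub: "\<And>i. i \<in> I \<Longrightarrow> subgroup (H i) G" using props unfolding open_subgroup_def by blast
  have Hc: "\<And>i. i \<in> I \<Longrightarrow> H i \<subseteq> carrier G" using subgroup.subset[OF sub] by blast
  have uc: "\<And>i. i \<in> I \<Longrightarrow> unitary_character G T (H i) (chi i)" using props by blast
  have chin: "\<And>i h. i \<in> I \<Longrightarrow> h \<in> H i \<Longrightarrow> cmod (chi i h) = 1"
    using uc unfolding unitary_character_def by blast
  have chim: "\<And>i h1 h2. i \<in> I \<Longrightarrow> h1 \<in> H i \<Longrightarrow> h2 \<in> H i \<Longrightarrow> chi i (h1 \<otimes> h2) = chi i h1 * chi i h2"
    using uc unfolding unitary_character_def by blast
  have lc_sub: "\<And>i C. i \<in> I \<Longrightarrow> C \<in> lcosets (H i) \<Longrightarrow> C \<subseteq> carrier G"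
    using subgroup.lcosets_carrier[OF sub grp] by blast
  have lc_act: "\<And>i g C. i \<in> I \<Longrightarrow> g \<in> carrier G \<Longrightarrow> C \<in> lcosets (H i) \<Longrightarrow> g <# C \<in> lcosets (H i)"
  proof -
    fix i g C assume i: "i \<in> I" and g: "g \<in> carrier G" and C: "C \<in> lcosets (H i)"
    obtain a where a: "a \<in> carrier G" "C = a <# H i" using C by (auto simp: LCOSETS_def)
    have "g <# C = (g \<otimes> a) <# H i" using a g lcos_m_assoc Hc[OF i] by simp
    thus "g <# C \<in> lcosets (H i)" using a g by (auto simp: LCOSETS_def)
  qed
  have H_lc: "\<And>i. i \<in> I \<Longrightarrow> H i \<in> lcosets (H i)"
  proof -
    fix i assume i: "i \<in> I"
    have "H i = \<one> <# H i" using lcos_mult_one[OF Hc[OF i]] by simp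
    thus "H i \<in> lcosets (H i)" unfolding LCOSETS_def using one_closed by blast
  qed
  define s where "s i C = (if C = H i then \<one> else SOME g. g \<in> C)" for i C
  have s_props: "\<And>i C. i \<in> I \<Longrightarrow> C \<in> lcosets (H i) \<Longrightarrow> s i C \<in> C \<and> s i C \<in> carrier G \<and> C = s i C <# H i"
  proof -
    fix i C assume i: "i \<in> I" and C: "C \<in> lcosets (H i)"
    obtain a where a: "a \<in> carrier G" "C = a <# H i" using C by (auto simp: LCOSETS_def)
    have aC: "a \<in> C" using a lcos_self sub[OF i] by simp
    have sC: "s i C \<in> C"
    proof (cases "C = H i")
      case True thus ?thesis using sub[OF i] by (simp add: s_def subgroup.one_closed)
    next
      case False thus ?thesis using aC by (simp add: s_def) (rule someI)
    qed
    moreover have "s i C \<in> carrier G" using sC a l_coset_carrier sub[OF i] by blast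
    moreover have "C = s i C <# H i" using a sC l_repr_independence sub[OF i] by blast
    ultimately show "s i C \<in> C \<and> s i C \<in> carrier G \<and> C = s i C <# H i" by blast
  qed
  define k where "k i g C = inv (s i (g <# C)) \<otimes> g \<otimes> s i C" for i g C
  have k_in: "\<And>i g C. i \<in> I \<Longrightarrow> g \<in> carrier G \<Longrightarrow> C \<in> lcosets (H i) \<Longrightarrow> k i g C \<in> H i"
  proof -
    fix i g C assume i: "i \<in> I" and g: "g \<in> carrier G" and C: "C \<in> lcosets (H i)"
    note sp = s_props[OF i C] and sp2 = s_props[OF i lc_act[OF i g C]]
    have "g \<otimes> s i C \<in> g <# C" using sp by (auto simp: l_coset_def)
    hence "g \<otimes> s i C \<in> s i (g <# C) <# H i" using sp2 by simp
    hence "inv (s i (g <# C)) \<otimes> (g \<otimes> s i C) \<in> H i"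
      using subgroup.lcos_module_imp[OF sub[OF i] grp] sp2 by blast
    thus "k i g C \<in> H i" using sp sp2 g by (simp add: k_def m_assoc)
  qed
  have k_mult: "\<And>i g1 g2 C. i \<in> I \<Longrightarrow> g1 \<in> carrier G \<Longrightarrow> g2 \<in> carrier G \<Longrightarrow> C \<in> lcosets (H i) \<Longrightarrow>
      k i (g1 \<otimes> g2) C = k i g1 (g2 <# C) \<otimes> k i g2 C"
  proof -
    fix i g1 g2 C assume i: "i \<in> I" and g: "g1 \<in> carrier G" "g2 \<in> carrier G" and C: "C \<in> lcosets (H i)"
    have e: "(g1 \<otimes> g2) <# C = g1 <# (g2 <# C)" using lcos_m_assoc lc_sub[OF i C] g by simp
    have c1: "s i (g1 <# (g2 <# C)) \<in> carrier G" using s_props lc_act i g C by blast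
    have c2: "s i (g2 <# C) \<in> carrier G" using s_props lc_act i g C by blast
    have c3: "s i C \<in> carrier G" using s_props i C by blast
    show "k i (g1 \<otimes> g2) C = k i g1 (g2 <# C) \<otimes> k i g2 C"
      unfolding k_def e using c1 c2 c3 g by (simp add: m_assoc) (simp add: m_assoc[symmetric])
  qed
  define c where "c g p = inverse (chi (fst p) (k (fst p) g (snd p)))" for g p
  have coc: "cocycle G (coset_union G I H) (coset_action G) c"
    unfolding cocycle_def
  proof (intro conjI ballI)
    fix g p assume g: "g \<in> carrier G" and p: "p \<in> coset_union G I H"
    then obtain i C where p': "p = (i, C)" "i \<in> I" "C \<in> lcosets (H i)" by (auto simp: coset_union_def)
    show "cmod (c g p) = 1" using chin k_in p' g by (simp add: c_def norm_inverse)
  next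
    fix g1 g2 p assume g: "g1 \<in> carrier G" "g2 \<in> carrier G" and p: "p \<in> coset_union G I H"
    then obtain i C where p': "p = (i, C)" "i \<in> I" "C \<in> lcosets (H i)" by (auto simp: coset_union_def)
    show "c (g1 \<otimes> g2) p = c g1 (coset_action G g2 p) * c g2 p"
      using k_mult[OF p'(2) g p'(3)] chim[OF p'(2) k_in[OF p'(2) g(1) lc_act[OF p'(2) g(2) p'(3)]] k_in[OF p'(2) g(2) p'(3)]]
      by (simp add: c_def p' coset_action_def)
  qed
  interpret core G "coset_union G I H" "coset_action G" c I "\<lambda>i. (i, H i)" H chi
  proof (rule core.intro)
    show "group G" by (rule grp)
    show "cocycle G (coset_union G I H) (coset_action G) c" by (rule coc)
    show "is_action G (coset_union G I H) (coset_action G)"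
      unfolding is_action_def
    proof (intro conjI ballI)
      fix g p assume g: "g \<in> carrier G" and p: "p \<in> coset_union G I H"
      then obtain i C where p': "p = (i, C)" "i \<in> I" "C \<in> lcosets (H i)" by (auto simp: coset_union_def)
      show "coset_action G g p \<in> coset_union G I H"
        using lc_act[OF p'(2) g p'(3)] p' by (simp add: coset_action_def coset_union_def)
    next
      fix p assume p: "p \<in> coset_union G I H"
      then obtain i C where p': "p = (i, C)" "i \<in> I" "C \<in> lcosets (H i)" by (auto simp: coset_union_def)
      show "coset_action G \<one> p = p" using lcos_mult_one lc_sub p' by (simp add: coset_action_def)
    next
      fix g1 g2 p assume g: "g1 \<in> carrier G" "g2 \<in> carrier G" and p: "p \<in> coset_union G I H"
      then obtain i C where p': "p = (i, C)" "i \<in> I" "C \<in> lcosets (H i)" by (auto simp: coset_union_def)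
      show "coset_action G (g1 \<otimes> g2) p = coset_action G g1 (coset_action G g2 p)"
        using lcos_m_assoc lc_sub[OF p'(2,3)] g p' by (simp add: coset_action_def)
    qed
    show "\<And>i. i \<in> I \<Longrightarrow> (i, H i) \<in> coset_union G I H" using H_lc by (simp add: coset_union_def)
    show "\<And>x. x \<in> coset_union G I H \<Longrightarrow> \<exists>i\<in>I. \<exists>g\<in>carrier G. x = coset_action G g (i, H i)"
    proof -
      fix x assume "x \<in> coset_union G I H"
      then obtain i C where p': "x = (i, C)" "i \<in> I" "C \<in> lcosets (H i)" by (auto simp: coset_union_def)
      obtain a where a: "a \<in> carrier G" "C = a <# H i" using p'(3) by (auto simp: LCOSETS_def)
      show "\<exists>i\<in>I. \<exists>g\<in>carrier G. x = coset_action G g (i, H i)"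
        using p' a by (auto simp: coset_action_def)
    qed
    show "\<And>i j g. i \<in> I \<Longrightarrow> j \<in> I \<Longrightarrow> g \<in> carrier G \<Longrightarrow> coset_action G g (i, H i) = (j, H j) \<Longrightarrow> i = j"
      by (simp add: coset_action_def)
    show "\<And>i. i \<in> I \<Longrightarrow> H i = {g \<in> carrier G. coset_action G g (i, H i) = (i, H i)}"
    proof -
      fix i assume i: "i \<in> I"
      show "H i = {g \<in> carrier G. coset_action G g (i, H i) = (i, H i)}"
      proof (intro equalityI subsetI)
        fix g assume g: "g \<in> H i"
        hence "g \<in> carrier G" using Hc[OF i] by blast
        thus "g \<in> {g \<in> carrier G. coset_action G g (i, H i) = (i, H i)}"
          using coset_join3 sub[OF i] g by (simp add: coset_action_def)
      next
        fix g assume "g \<in> {g \<in> carrier G. coset_action G g (i, H i) = (i, H i)}"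
        hence g: "g \<in> carrier G" "g <# H i = H i" by (auto simp: coset_action_def)
        thus "g \<in> H i" using lcos_self[OF g(1) sub[OF i]] by simp
      qed
    qed
    show "\<And>i h. i \<in> I \<Longrightarrow> h \<in> H i \<Longrightarrow> chi i h = inverse (c h (i, H i))"
    proof -
      fix i h assume i: "i \<in> I" and h: "h \<in> H i"
      have hc: "h \<in> carrier G" using h Hc[OF i] by blast
      have "h <# H i = H i" using coset_join3 sub[OF i] h hc by simp
      hence "k i h (H i) = h" using hc by (simp add: k_def s_def)
      thus "chi i h = inverse (c h (i, H i))" by (simp add: c_def)
    qed
  qed
  show ?thesis by (intro exI[of _ c] conjI coc equiv2)
qed

theorem corollary2p3:
  fixes G :: "('g, 'b) monoid_scheme" and T :: "'g topology"
  assumes "topological_group G T"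
  shows
   "(\<forall>(X :: 'x set) \<phi> c.
       continuous_action G T X \<phi> \<and> continuous_cocycle G T X \<phi> c \<longrightarrow>
       (\<exists>(I :: 'x set) H chi.
          (\<forall>i\<in>I. open_subgroup G T (H i) \<and> unitary_character G T (H i) (chi i)) \<and>
          unitarily_equivalent G
            (l2 X) (l2norm X) (twisted_perm G X \<phi> c)
            (dsum_space G I H chi) (dsum_norm G I H) (dsum_action G)))
    \<and>
    (\<forall>(I :: 'i set) H chi.
       (\<forall>i\<in>I. open_subgroup G T (H i) \<and> unitary_character G T (H i) (chi i)) \<longrightarrow>
       (\<exists>c. cocycle G (coset_union G I H) (coset_action G) c \<and>
          unitarily_equivalent G
            (dsum_space G I H chi) (dsum_norm G I H) (dsum_action G)
            (l2 (coset_union G I H)) (l2norm (coset_union G I H))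
            (twisted_perm G (coset_union G I H) (coset_action G) c)))"
proof (intro conjI allI impI)
  fix X :: "'x set" and \<phi> c
  assume h: "continuous_action G T X \<phi> \<and> continuous_cocycle G T X \<phi> c"
  show "\<exists>(I :: 'x set) H chi.
          (\<forall>i\<in>I. open_subgroup G T (H i) \<and> unitary_character G T (H i) (chi i)) \<and>
          unitarily_equivalent G
            (l2 X) (l2norm X) (twisted_perm G X \<phi> c)
            (dsum_space G I H chi) (dsum_norm G I H) (dsum_action G)"
    using h by (intro part1[OF assms]) simp_all
next
  fix I :: "'i set" and H chi
  assume h: "\<forall>i\<in>I. open_subgroup G T (H i) \<and> unitary_character G T (H i) (chi i)"
  show "\<exists>c. cocycle G (coset_union G I H) (coset_action G) c \<and>
          unitarily_equivalent G
            (dsum_space G I H chi) (dsum_norm G I H) (dsum_action G)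
            (l2 (coset_union G I H)) (l2norm (coset_union G I H))
            (twisted_perm G (coset_union G I H) (coset_action G) c)"
    by (rule part2[OF assms h])
qed

end
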